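(* Suppose that $G$ is a group with a finite-index normal subgroup $A\cong\mathbb{Z}^m$, and that there is a homomorphism $\operatorname{sgn}\colon G\to\{1,-1\}$ such that for all $g\in G$ and $x\in A$ we have $g^{-1}xg=x^{\operatorname{sgn}(g)}$. Then $\alpha_G$ is linear.
   Context: For a finitely generated group $G$ with finite generating set $\Sigma$, the automorphic growth function sends $n$ to the number of $\operatorname{Aut}(G)$-orbits of $G$ containing an element of word length at most $n$; $\alpha_G$ is its class under $\sim$, where $f\sim g$ iff $f\preccurlyeq g$ and $g\preccurlyeq f$, and $f\preccurlyeq g$ means there is $\lambda\in\mathbb{N}\setminus\{0\}$ with $f(n)\le\lambda g(\lambda n+\lambda)+\lambda$ for all $n$. Linear means $\alpha_G\sim(n\mapsto n)$. *)

theory Defs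
  imports "HOL-Algebra.Algebra" "HOL-Algebra.Free_Abelian_Groups"
begin

definition word_eval :: "('a, 'b) monoid_scheme \<Rightarrow> 'a list \<Rightarrow> 'a" where
  "word_eval G ws = foldr (\<lambda>x y. x \<otimes>\<^bsub>G\<^esub> y) ws \<one>\<^bsub>G\<^esub>"

definition word_length :: "('a, 'b) monoid_scheme \<Rightarrow> 'a set \<Rightarrow> 'a \<Rightarrow> nat" where
  "word_length G S x = (LEAST k. \<exists>ws. length ws = k \<and>
       set ws \<subseteq> S \<union> (\<lambda>s. inv\<^bsub>G\<^esub> s) ` S \<and> word_eval G ws = x)"

definition aut_orbit :: "('a, 'b) monoid_scheme \<Rightarrow> 'a \<Rightarrow> 'a set" where
  "aut_orbit G x = {\<phi> x | \<phi>. \<phi> \<in> iso G G}"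

definition aut_growth :: "('a, 'b) monoid_scheme \<Rightarrow> 'a set \<Rightarrow> nat \<Rightarrow> nat" where
  "aut_growth G S n = card {aut_orbit G x | x. x \<in> carrier G \<and> word_length G S x \<le> n}"

definition growth_le :: "(nat \<Rightarrow> nat) \<Rightarrow> (nat \<Rightarrow> nat) \<Rightarrow> bool" where
  "growth_le f g \<longleftrightarrow> (\<exists>c::nat. c \<noteq> 0 \<and> (\<forall>n. f n \<le> c * g (c * n + c) + c))"

definition growth_equiv :: "(nat \<Rightarrow> nat) \<Rightarrow> (nat \<Rightarrow> nat) \<Rightarrow> bool" where
  "growth_equiv f g \<longleftrightarrow> growth_le f g \<and> growth_le g f"

definition sign_group :: "int monoid" where
  "sign_group = \<lparr>carrier = {1, -1}, monoid.mult = (*), one = 1\<rparr>"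

end

theory Submission
  imports Defs
begin


section \<open>Integer linear algebra on finitely supported vectors\<close>

definition VI :: "nat \<Rightarrow> (nat \<Rightarrow>\<^sub>0 int) set" where
  "VI m = {v. Poly_Mapping.keys v \<subseteq> {..<m}}"

definition dot :: "nat \<Rightarrow> (nat \<Rightarrow> int) \<Rightarrow> (nat \<Rightarrow>\<^sub>0 int) \<Rightarrow> int" where
  "dot m l v = (\<Sum>i<m. l i * Poly_Mapping.lookup v i)"

definition cont :: "nat \<Rightarrow> (nat \<Rightarrow>\<^sub>0 int) \<Rightarrow> int" where
  "cont m v = Gcd (Poly_Mapping.lookup v ` {..<m})"

definition divp :: "int \<Rightarrow> (nat \<Rightarrow>\<^sub>0 int) \<Rightarrow> (nat \<Rightarrow>\<^sub>0 int)" where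
  "divp d v = Poly_Mapping.map (\<lambda>x. x div d) v"

lemma lookup_divp [simp]: "Poly_Mapping.lookup (divp d v) i = Poly_Mapping.lookup v i div d"
  by (simp add: divp_def map.rep_eq when_def)

lemma VI_lookup: "v \<in> VI m \<Longrightarrow> \<not> i < m \<Longrightarrow> Poly_Mapping.lookup v i = 0"
  unfolding VI_def by (metis in_keys_iff lessThan_iff mem_Collect_eq subsetD)

lemma VI_I: "(\<And>i. \<not> i < m \<Longrightarrow> Poly_Mapping.lookup v i = 0) \<Longrightarrow> v \<in> VI m"
  unfolding VI_def by (auto simp: in_keys_iff)

lemma VI_eqI: "v \<in> VI m \<Longrightarrow> w \<in> VI m \<Longrightarrow> (\<And>i. i < m \<Longrightarrow> Poly_Mapping.lookup v i = Poly_Mapping.lookup w i) \<Longrightarrow> v = w"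
  by (rule poly_mapping_eqI) (metis VI_lookup)

lemma VI_add [simp]: "v \<in> VI m \<Longrightarrow> w \<in> VI m \<Longrightarrow> v + w \<in> VI m"
  by (rule VI_I) (simp add: VI_lookup lookup_add)

lemma VI_diff [simp]: "v \<in> VI m \<Longrightarrow> w \<in> VI m \<Longrightarrow> v - w \<in> VI m"
  by (rule VI_I) (simp add: VI_lookup lookup_minus)

lemma VI_uminus [simp]: "v \<in> VI m \<Longrightarrow> - v \<in> VI m"
  by (rule VI_I) (simp add: VI_lookup)

lemma VI_cmul [simp]: "v \<in> VI m \<Longrightarrow> frag_cmul c v \<in> VI m"
  by (rule VI_I) (simp add: VI_lookup)

lemma VI_divp [simp]: "v \<in> VI m \<Longrightarrow> divp c v \<in> VI m"
  by (rule VI_I) (simp add: VI_lookup)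

lemma VI_zero [simp]: "0 \<in> VI m"
  by (simp add: VI_def)

lemma dot_add [simp]: "dot m l (v + w) = dot m l v + dot m l w"
  by (simp add: dot_def lookup_add distrib_left sum.distrib)

lemma dot_diff [simp]: "dot m l (v - w) = dot m l v - dot m l w"
  by (simp add: dot_def lookup_minus right_diff_distrib sum_subtractf)

lemma dot_cmul [simp]: "dot m l (frag_cmul c v) = c * dot m l v"
  by (simp add: dot_def sum_distrib_left mult_ac)

lemma dot_zero [simp]: "dot m l 0 = 0"
  by (simp add: dot_def)

lemma dot_fun: "dot m (\<lambda>i. l1 i - c * l2 i) v = dot m l1 v - c * dot m l2 v"
  by (simp add: dot_def algebra_simps sum_subtractf sum_distrib_left)

lemma bezout_gen: "\<exists>l. (\<Sum>i<(k::nat). l i * Poly_Mapping.lookup (v::nat \<Rightarrow>\<^sub>0 int) i) = Gcd (Poly_Mapping.lookup v ` {..<k})"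
proof (induction k)
  case 0
  then show ?case by simp
next
  case (Suc k)
  then obtain l where l: "(\<Sum>i<k. l i * Poly_Mapping.lookup v i) = Gcd (Poly_Mapping.lookup v ` {..<k})" by blast
  obtain s t where st: "s * Poly_Mapping.lookup v k + t * Gcd (Poly_Mapping.lookup v ` {..<k}) = gcd (Poly_Mapping.lookup v k) (Gcd (Poly_Mapping.lookup v ` {..<k}))"
    using bezout_int by blast
  define l' where "l' = (\<lambda>i. if i = k then s else t * l i)"
  have "(\<Sum>i<Suc k. l' i * Poly_Mapping.lookup v i) = s * Poly_Mapping.lookup v k + (\<Sum>i<k. t * l i * Poly_Mapping.lookup v i)"
    by (simp add: l'_def)
  also have "\<dots> = s * Poly_Mapping.lookup v k + t * (\<Sum>i<k. l i * Poly_Mapping.lookup v i)"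
    by (simp add: sum_distrib_left mult_ac)
  also have "\<dots> = Gcd (Poly_Mapping.lookup v ` {..<Suc k})"
    using st l by (simp add: lessThan_Suc)
  finally show ?case by blast
qed

lemma bezout_dot: "\<exists>l. dot m l v = cont m v"
  unfolding dot_def cont_def by (rule bezout_gen)

lemma cont_dvd: "i < m \<Longrightarrow> cont m v dvd Poly_Mapping.lookup v i"
  unfolding cont_def by (rule Gcd_dvd) auto

lemma dvd_cont: "(\<And>i. i < m \<Longrightarrow> d dvd Poly_Mapping.lookup v i) \<Longrightarrow> d dvd cont m v"
  unfolding cont_def by (auto simp: dvd_Gcd_iff)

lemma cont_nonneg: "0 \<le> cont m v"
  unfolding cont_def by simp

lemma cont_0_iff: "v \<in> VI m \<Longrightarrow> cont m v = 0 \<longleftrightarrow> v = 0"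
proof
  assume v: "v \<in> VI m" and "cont m v = 0"
  then have "\<forall>i<m. Poly_Mapping.lookup v i = 0" unfolding cont_def by auto
  then show "v = 0" using v by (intro VI_eqI) auto
qed (auto simp: cont_def)

lemma cont_cmul: "cont m (frag_cmul c v) = \<bar>c\<bar> * cont m v"
proof -
  have "Poly_Mapping.lookup (frag_cmul c v) ` {..<m} = (*) c ` (Poly_Mapping.lookup v ` {..<m})"
    by auto
  then show ?thesis unfolding cont_def by (simp add: Gcd_mult abs_mult)
qed

lemma divp_cmul: 
  assumes "\<And>i. d dvd Poly_Mapping.lookup v i"
  shows "frag_cmul d (divp d v) = v"
  by (rule poly_mapping_eqI) (use assms in auto)

lemma prim_decomp:
  assumes v: "v \<in> VI m" and nz: "v \<noteq> 0"
  shows "divp (cont m v) v \<in> VI m \<and> cont m (divp (cont m v) v) = 1 \<and> frag_cmul (cont m v) (divp (cont m v) v) = v"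
proof -
  have d: "cont m v dvd Poly_Mapping.lookup v i" for i
    using cont_dvd v VI_lookup by (cases "i < m") auto
  then have e: "frag_cmul (cont m v) (divp (cont m v) v) = v" by (rule divp_cmul)
  have pos: "cont m v > 0" using cont_0_iff[OF v] nz cont_nonneg[of m v] by linarith
  have "cont m v = cont m v * cont m (divp (cont m v) v)"
    using arg_cong[OF e, of "cont m"] pos by (simp add: cont_cmul)
  then have "cont m (divp (cont m v) v) = 1" using pos by simp
  then show ?thesis using e v by simp
qed



definition linmap :: "nat \<Rightarrow> ((nat \<Rightarrow>\<^sub>0 int) \<Rightarrow> (nat \<Rightarrow>\<^sub>0 int)) \<Rightarrow> bool" where
  "linmap m L \<longleftrightarrow> (\<forall>v w. L (v + w) = L v + L w) \<and> (\<forall>c v. L (frag_cmul c v) = frag_cmul c (L v))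
      \<and> (\<forall>v\<in>VI m. L v \<in> VI m)"

definition Mm :: "int \<Rightarrow> ((nat \<Rightarrow>\<^sub>0 int) \<Rightarrow> (nat \<Rightarrow>\<^sub>0 int)) \<Rightarrow> (nat \<Rightarrow>\<^sub>0 int) \<Rightarrow> (nat \<Rightarrow>\<^sub>0 int)" where
  "Mm N L v = v + frag_cmul N (L v)"

definition E2 where
  "E2 m l n w q c11 c12 c21 c22 v = v + frag_cmul (dot m l v * c11 + dot m n v * c12) w
      + frag_cmul (dot m l v * c21 + dot m n v * c22) q"

lemma E2_VI: "v \<in> VI m \<Longrightarrow> w \<in> VI m \<Longrightarrow> q \<in> VI m \<Longrightarrow> E2 m l n w q c11 c12 c21 c22 v \<in> VI m"
  by (simp add: E2_def)

lemma E2_inv: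
  assumes lw: "dot m l w = 1" and lq: "dot m l q = 0" and nw: "dot m n w = 0" and nq: "dot m n q = 1"
    and e11: "c11 + d11 + d11 * c11 + d12 * c21 = 0"
    and e12: "c12 + d12 + d11 * c12 + d12 * c22 = 0"
    and e21: "c21 + d21 + d21 * c11 + d22 * c21 = 0"
    and e22: "c22 + d22 + d21 * c12 + d22 * c22 = 0"
  shows "E2 m l n w q d11 d12 d21 d22 (E2 m l n w q c11 c12 c21 c22 v) = v"
proof -
  define \<alpha> where "\<alpha> = dot m l v"
  define \<beta> where "\<beta> = dot m n v"
  have a2: "dot m l (E2 m l n w q c11 c12 c21 c22 v) = \<alpha> * (1 + c11) + \<beta> * c12"
    by (simp add: E2_def lw lq \<alpha>_def \<beta>_def algebra_simps)
  have b2: "dot m n (E2 m l n w q c11 c12 c21 c22 v) = \<alpha> * c21 + \<beta> * (1 + c22)"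
    by (simp add: E2_def nw nq \<alpha>_def \<beta>_def algebra_simps)
  show ?thesis
  proof (rule poly_mapping_eqI)
    fix i
    have "Poly_Mapping.lookup (E2 m l n w q d11 d12 d21 d22 (E2 m l n w q c11 c12 c21 c22 v)) i
      = Poly_Mapping.lookup v i
        + (\<alpha> * (c11 + d11 + d11 * c11 + d12 * c21) + \<beta> * (c12 + d12 + d11 * c12 + d12 * c22)) * Poly_Mapping.lookup w i
        + (\<alpha> * (c21 + d21 + d21 * c11 + d22 * c21) + \<beta> * (c22 + d22 + d21 * c12 + d22 * c22)) * Poly_Mapping.lookup q i"
      by (simp add: E2_def lookup_add lw lq nw nq \<alpha>_def \<beta>_def algebra_simps)
    then show "Poly_Mapping.lookup (E2 m l n w q d11 d12 d21 d22 (E2 m l n w q c11 c12 c21 c22 v)) i = Poly_Mapping.lookup v i"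
      by (simp add: e11 e12 e21 e22)
  qed
qed

definition E1 where
  "E1 m l w c v = v + frag_cmul (dot m l v * c) w"

lemma E1_inv:
  assumes lw: "dot m l w = 1" and e: "c + d + d * c = 0"
  shows "E1 m l w d (E1 m l w c v) = v"
proof (rule poly_mapping_eqI)
  fix i
  have a2: "dot m l (E1 m l w c v) = dot m l v * (1 + c)"
    by (simp add: E1_def lw algebra_simps)
  have "Poly_Mapping.lookup (E1 m l w d (E1 m l w c v)) i = Poly_Mapping.lookup v i + dot m l v * (c + d + d * c) * Poly_Mapping.lookup w i"
    unfolding E1_def[of m l w d] a2 by (simp add: E1_def lookup_add algebra_simps)
  then show "Poly_Mapping.lookup (E1 m l w d (E1 m l w c v)) i = Poly_Mapping.lookup v i"
    by (simp add: e)
qed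

lemma bij_inv_VI:
  assumes "\<And>v. v \<in> VI m \<Longrightarrow> F v \<in> VI m" "\<And>v. v \<in> VI m \<Longrightarrow> F' v \<in> VI m"
    "\<And>v. v \<in> VI m \<Longrightarrow> F' (F v) = v" "\<And>v. v \<in> VI m \<Longrightarrow> F (F' v) = v"
  shows "bij_betw F (VI m) (VI m)"
  by (rule bij_betw_byWitness[where f'=F']) (use assms in auto)

lemma linmap_gen:
  assumes "u1 \<in> VI m" "u2 \<in> VI m"
  shows "linmap m (\<lambda>v. frag_cmul (dot m l v * a1 + dot m n v * b1) u1 + frag_cmul (dot m l v * a2 + dot m n v * b2) u2)"
  unfolding linmap_def
proof (intro conjI allI ballI)
  show "frag_cmul (dot m l (v + w) * a1 + dot m n (v + w) * b1) u1 + frag_cmul (dot m l (v + w) * a2 + dot m n (v + w) * b2) u2 =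
    frag_cmul (dot m l v * a1 + dot m n v * b1) u1 + frag_cmul (dot m l v * a2 + dot m n v * b2) u2 +
    (frag_cmul (dot m l w * a1 + dot m n w * b1) u1 + frag_cmul (dot m l w * a2 + dot m n w * b2) u2)" for v w
    by (rule poly_mapping_eqI) (simp add: lookup_add algebra_simps)
  show "frag_cmul (dot m l (frag_cmul c v) * a1 + dot m n (frag_cmul c v) * b1) u1 + frag_cmul (dot m l (frag_cmul c v) * a2 + dot m n (frag_cmul c v) * b2) u2 =
    frag_cmul c (frag_cmul (dot m l v * a1 + dot m n v * b1) u1 + frag_cmul (dot m l v * a2 + dot m n v * b2) u2)" for c v
    by (rule poly_mapping_eqI) (simp add: lookup_add algebra_simps)
  show "frag_cmul (dot m l v * a1 + dot m n v * b1) u1 + frag_cmul (dot m l v * a2 + dot m n v * b2) u2 \<in> VI m" for v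
    using assms by simp
qed

lemma transitivity:
  assumes N: "N > 0" and w: "w \<in> VI m" and w': "w' \<in> VI m"
    and cw: "cont m w = 1" and cw': "cont m w' = 1"
    and cong: "\<And>i. i < m \<Longrightarrow> Poly_Mapping.lookup w i mod N = Poly_Mapping.lookup w' i mod N"
  shows "\<exists>L. linmap m L \<and> bij_betw (Mm N L) (VI m) (VI m) \<and> Mm N L w = w'"
proof -
  obtain l where lw: "dot m l w = 1" using bezout_dot[of m w] cw by metis
  define z where "z = divp N (w' - w)"
  have dv: "N dvd Poly_Mapping.lookup (w' - w) i" for i
  proof (cases "i < m")
    case True
    then show ?thesis using cong[OF True] by (simp add: lookup_minus mod_eq_dvd_iff) (metis dvd_diff_commute)
  next
    case False
    then show ?thesis using w w' by (simp add: lookup_minus VI_lookup)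
  qed
  have zVI: "z \<in> VI m" using w w' by (simp add: z_def)
  have w'eq: "w' = w + frag_cmul N z"
    using divp_cmul[of N "w' - w", OF dv] by (simp add: z_def)
  define z1 where "z1 = dot m l z"
  define zp where "zp = z - frag_cmul z1 w"
  have zpVI: "zp \<in> VI m" using zVI w by (simp add: zp_def)
  have lzp: "dot m l zp = 0" by (simp add: zp_def lw z1_def)
  show ?thesis
  proof (cases "zp = 0")
    case True
    then have zeq: "z = frag_cmul z1 w" by (simp add: zp_def)
    have w'2: "w' = frag_cmul (1 + N * z1) w"
      by (rule poly_mapping_eqI) (simp add: w'eq zeq lookup_add algebra_simps)
    have "\<bar>1 + N * z1\<bar> = 1" using cw' cw by (simp add: w'2 cont_cmul)
    then have "N * z1 = 0 \<or> N * z1 = -2" by linarith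
    then have sq: "(N * z1) + (N * z1) + (N * z1) * (N * z1) = 0" by auto
    define L where "L = (\<lambda>v. frag_cmul (dot m l v * z1 + dot m l v * 0) w + frag_cmul (dot m l v * 0 + dot m l v * 0) w)"
    have lin: "linmap m L" unfolding L_def using w w by (rule linmap_gen)
    have MLeq: "Mm N L v = E1 m l w (N * z1) v" for v
      by (rule poly_mapping_eqI) (simp add: Mm_def L_def E1_def lookup_add algebra_simps)
    have bij: "bij_betw (Mm N L) (VI m) (VI m)"
    proof (rule bij_inv_VI[where F'="Mm N L"])
      show inv: "Mm N L (Mm N L v) = v" for v unfolding MLeq by (rule E1_inv[OF lw sq])
      show "v \<in> VI m \<Longrightarrow> Mm N L v \<in> VI m" for v by (simp add: MLeq E1_def w)
      then show "v \<in> VI m \<Longrightarrow> Mm N L v \<in> VI m" for v .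
      show "Mm N L (Mm N L v) = v" for v by (rule inv)
    qed
    have "Mm N L w = w'"
      by (rule poly_mapping_eqI) (simp add: Mm_def L_def lw w'2 lookup_add algebra_simps)
    then show ?thesis using lin bij by blast
  next
    case False
    define g where "g = cont m zp"
    define q where "q = divp g zp"
    have pd: "q \<in> VI m" "cont m q = 1" "frag_cmul g q = zp"
      using prim_decomp[OF zpVI False] by (auto simp: q_def g_def)
    have gpos: "g > 0" using cont_0_iff[OF zpVI] False cont_nonneg[of m zp] by (simp add: g_def)
    have lq: "dot m l q = 0"
      using lzp arg_cong[OF pd(3), of "dot m l"] gpos by simp
    obtain n0 where n0q: "dot m n0 q = 1" using pd(2) by (metis bezout_dot)
    define n where "n = (\<lambda>i. n0 i - dot m n0 w * l i)"
    have nw: "dot m n w = 0" by (simp add: n_def dot_fun lw)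
    have nq: "dot m n q = 1" by (simp add: n_def dot_fun lq n0q)
    define a where "a = 1 + N * z1"
    define b where "b = N * g"
    have w'3: "w' = frag_cmul a w + frag_cmul b q"
    proof (rule poly_mapping_eqI)
      fix i
      have "Poly_Mapping.lookup z i = z1 * Poly_Mapping.lookup w i + g * Poly_Mapping.lookup q i"
        using arg_cong[OF pd(3), of "\<lambda>v. Poly_Mapping.lookup v i"]
        by (simp add: zp_def lookup_minus)
      then show "Poly_Mapping.lookup w' i = Poly_Mapping.lookup (frag_cmul a w + frag_cmul b q) i"
        by (simp add: w'eq lookup_add a_def b_def algebra_simps)
    qed
    have "gcd a b dvd cont m w'"
      by (rule dvd_cont) (simp add: w'3 lookup_add)
    then have gab: "gcd a b = 1" using cw' by simp
    obtain s t where st: "s * a + t * b = 1" using bezout_int[of a b] gab by auto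
    define p' where "p' = - t"
    define q' where "q' = s"
    have rel: "(1 + N * z1) * q' - N * g * p' = 1" using st by (simp add: a_def b_def p'_def q'_def algebra_simps)
    define L where "L = (\<lambda>v. frag_cmul (dot m l v * z1 + dot m n v * (- z1 * p')) w
                          + frag_cmul (dot m l v * g + dot m n v * (- z1 * q')) q)"
    have lin: "linmap m L" unfolding L_def using w pd(1) by (rule linmap_gen)
    have MLeq: "Mm N L v = E2 m l n w q (N * z1) (N * (- z1 * p')) (N * g) (N * (- z1 * q')) v" for v
      by (rule poly_mapping_eqI) (simp add: Mm_def L_def E2_def lookup_add algebra_simps)
    define M' where "M' = E2 m l n w q (N * (- z1 * q')) (N * (p' * z1)) (N * (- g)) (N * z1)"
    have hz: "xx = N*z1*(1 - ((1 + N*z1)*q' - N*g*p')) \<Longrightarrow> xx = 0" for xx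
      using rel by simp
    have i1: "M' (Mm N L v) = v" for v
      unfolding MLeq M'_def
      apply (rule E2_inv[OF lw lq nw nq])
         apply (rule hz, simp add: algebra_simps)
        apply (simp add: algebra_simps)
       apply (simp add: algebra_simps)
      apply (rule hz, simp add: algebra_simps)
      done
    have i2: "Mm N L (M' v) = v" for v
      unfolding MLeq M'_def
      apply (rule E2_inv[OF lw lq nw nq])
         apply (rule hz, simp add: algebra_simps)
        apply (simp add: algebra_simps)
       apply (simp add: algebra_simps)
      apply (rule hz, simp add: algebra_simps)
      done
    have bij: "bij_betw (Mm N L) (VI m) (VI m)"
      by (rule bij_inv_VI[where F'=M']) (use w pd(1) i1 i2 in \<open>auto simp: MLeq M'_def E2_VI\<close>)
    have "Mm N L w = w'"
      by (rule poly_mapping_eqI) (simp add: Mm_def L_def lw nw w'3 lookup_add a_def b_def algebra_simps)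
    then show ?thesis using lin bij by blast
  qed
qed



lemma sum_VI: "(\<And>i. i \<in> I \<Longrightarrow> g i \<in> VI m) \<Longrightarrow> sum g I \<in> VI m"
  by (rule VI_I) (simp add: lookup_sum, rule sum.neutral, blast intro: VI_lookup)

lemma cmul_sum: "frag_cmul c (sum g I) = (\<Sum>i\<in>I. frag_cmul c (g i))"
  by (rule poly_mapping_eqI) (simp add: lookup_sum sum_distrib_left)

lemma cmul_inj: "c \<noteq> 0 \<Longrightarrow> frag_cmul c u = frag_cmul c v \<Longrightarrow> u = v"
  by (rule poly_mapping_eqI) (metis lookup_frag_cmul mult_cancel_left)

lemma (in group) crossed_aut:
  assumes sub: "subgroup H G"
   and DH: "\<And>x. x \<in> carrier G \<Longrightarrow> D x \<in> H"
   and Dm: "\<And>x y. x \<in> carrier G \<Longrightarrow> y \<in> carrier G \<Longrightarrow> D (x \<otimes> y) = D x \<otimes> (x \<otimes> D y \<otimes> inv x)"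
   and bij: "bij_betw (\<lambda>a. D a \<otimes> a) H H"
  shows "(\<lambda>x. D x \<otimes> x) \<in> iso G G"
proof -
  have Hc: "H \<subseteq> carrier G" using sub by (rule subgroup.subset)
  have Dc: "x \<in> carrier G \<Longrightarrow> D x \<in> carrier G" for x using DH Hc by blast
  have hom: "(\<lambda>x. D x \<otimes> x) \<in> hom G G"
  proof (rule homI)
    show "x \<in> carrier G \<Longrightarrow> D x \<otimes> x \<in> carrier G" for x using Dc by simp
    show "D (x \<otimes> y) \<otimes> (x \<otimes> y) = D x \<otimes> x \<otimes> (D y \<otimes> y)" if "x \<in> carrier G" "y \<in> carrier G" for x y
    proof -
      have c: "inv x \<otimes> (x \<otimes> y) = y" using that by (simp add: m_assoc[symmetric])
      show ?thesis using that Dc by (simp add: Dm m_assoc c)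
    qed
  qed
  then interpret gh: group_hom G G "\<lambda>x. D x \<otimes> x" by (simp add: group_hom_axioms_def group_hom_def is_group)
  have D1: "D \<one> = \<one>"
  proof -
    have "D \<one> \<otimes> \<one> = D \<one> \<otimes> D \<one>" using Dm[of \<one> \<one>] Dc[of \<one>] by (simp add: m_assoc)
    then show ?thesis using l_cancel[of "D \<one>" "\<one>" "D \<one>"] Dc[of \<one>] by simp
  qed
  have injH: "inj_on (\<lambda>a. D a \<otimes> a) H" using bij by (simp add: bij_betw_def)
  have ker: "z = \<one>" if z: "z \<in> carrier G" "D z \<otimes> z = \<one>" for z
  proof -
    have iz: "inv z = D z" by (rule inv_equality) (use z Dc in auto)
    have "inv (D z) = z" using z by (simp flip: iz)
    then have zH: "z \<in> H" using DH[OF z(1)] sub subgroup.m_inv_closed by fastforce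
    have "D z \<otimes> z = D \<one> \<otimes> \<one>" using z D1 by simp
    then show ?thesis using inj_onD[OF injH _ zH subgroup.one_closed[OF sub]] by simp
  qed
  have inj: "inj_on (\<lambda>x. D x \<otimes> x) (carrier G)"
  proof (rule inj_onI)
    fix x y assume x: "x \<in> carrier G" and y: "y \<in> carrier G" and e: "D x \<otimes> x = D y \<otimes> y"
    have h1: "D (y \<otimes> inv x) \<otimes> (y \<otimes> inv x) = (D y \<otimes> y) \<otimes> (D (inv x) \<otimes> inv x)"
      by (rule gh.hom_mult) (use x y in auto)
    have h2: "D (inv x) \<otimes> inv x = inv (D x \<otimes> x)"
      by (rule gh.hom_inv) (use x in auto)
    have h3: "(D y \<otimes> y) \<otimes> inv (D x \<otimes> x) = \<one>"
      unfolding e using y Dc[OF y] by (intro r_inv) auto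
    have hk: "D (y \<otimes> inv x) \<otimes> (y \<otimes> inv x) = \<one>" unfolding h1 h2 h3 ..
    have "y \<otimes> inv x = \<one>" by (rule ker) (use x y hk in auto)
    then show "x = y" using inv_equality[of y "inv x"] x y by simp
  qed
  have surj: "(\<lambda>x. D x \<otimes> x) ` carrier G = carrier G"
  proof
    show "(\<lambda>x. D x \<otimes> x) ` carrier G \<subseteq> carrier G" using Dc by auto
    show "carrier G \<subseteq> (\<lambda>x. D x \<otimes> x) ` carrier G"
    proof
      fix y assume y: "y \<in> carrier G"
      have "inv (D y) \<in> H" using DH[OF y] sub subgroup.m_inv_closed by fastforce
      then obtain a where a: "a \<in> H" "D a \<otimes> a = inv (D y)" using bij unfolding bij_betw_def by force
      have ac: "a \<in> carrier G" using a Hc by blast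
      have "D (a \<otimes> y) \<otimes> (a \<otimes> y) = (D a \<otimes> a) \<otimes> (D y \<otimes> y)" using gh.hom_mult[of a y] ac y by simp
      also have "\<dots> = inv (D y) \<otimes> (D y \<otimes> y)" using a by simp
      also have "\<dots> = y" using y Dc by (simp add: m_assoc[symmetric])
      finally have "y = D (a \<otimes> y) \<otimes> (a \<otimes> y)" by simp
      moreover have "a \<otimes> y \<in> carrier G" using ac y by simp
      ultimately show "y \<in> (\<lambda>x. D x \<otimes> x) ` carrier G" by (rule image_eqI)
    qed
  qed
  show ?thesis using hom inj surj by (simp add: iso_iff)
qed

locale mt = normal A G for A and G (structure) +
  fixes m :: nat and sgn :: "'a \<Rightarrow> int" and f :: "'a \<Rightarrow> nat \<Rightarrow>\<^sub>0 int"
  assumes m1: "1 \<le> m" and fin: "finite (rcosets A)"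
    and fiso: "f \<in> iso (G\<lparr>carrier := A\<rparr>) (free_Abelian_group {..<m})"
    and sg: "sgn \<in> hom G sign_group"
    and act: "\<forall>g\<in>carrier G. \<forall>x\<in>A. inv g \<otimes> x \<otimes> g = x [^] sgn g"
begin

definition finv where "finv = inv_into A f"

lemma Ac: "a \<in> A \<Longrightarrow> a \<in> carrier G"
  using subset by blast

lemma f_VI: "a \<in> A \<Longrightarrow> f a \<in> VI m"
  using fiso unfolding iso_def hom_def VI_def by (auto simp: Pi_def)

lemma f_mult: "a \<in> A \<Longrightarrow> b \<in> A \<Longrightarrow> f (a \<otimes> b) = f a + f b"
  using fiso unfolding iso_def hom_def by auto

lemma f_bij: "bij_betw f A (VI m)"
  using fiso unfolding iso_def VI_def by (simp add: free_Abelian_group_def)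

lemma f_inj: "a \<in> A \<Longrightarrow> b \<in> A \<Longrightarrow> f a = f b \<Longrightarrow> a = b"
  using f_bij unfolding bij_betw_def inj_on_def by blast

lemma finv_A: "v \<in> VI m \<Longrightarrow> finv v \<in> A"
  unfolding finv_def by (metis bij_betw_def f_bij inv_into_into)

lemma f_finv: "v \<in> VI m \<Longrightarrow> f (finv v) = v"
  unfolding finv_def by (metis bij_betw_def f_bij f_inv_into_f)

lemma finv_f: "a \<in> A \<Longrightarrow> finv (f a) = a"
  unfolding finv_def by (metis bij_betw_def f_bij inv_into_f_f)

lemma f_one: "f \<one> = 0"
proof -
  have "f \<one> = f \<one> + f \<one>" using f_mult[of \<one> \<one>] one_closed by simp
  then show ?thesis by simp
qed

lemma f_inv: "a \<in> A \<Longrightarrow> f (inv a) = - f a"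
proof -
  assume a: "a \<in> A"
  have "f a + f (inv a) = 0" using f_mult[of a "inv a"] a m_inv_closed f_one Ac by simp
  then show ?thesis by (simp add: eq_neg_iff_add_eq_0 add.commute)
qed

lemma A_comm: "a \<in> A \<Longrightarrow> b \<in> A \<Longrightarrow> a \<otimes> b = b \<otimes> a"
  by (rule f_inj) (auto simp: f_mult add.commute)

lemma finv_add: "v \<in> VI m \<Longrightarrow> w \<in> VI m \<Longrightarrow> finv (v + w) = finv v \<otimes> finv w"
  by (rule f_inj) (auto simp: f_mult f_finv finv_A)

lemma sgn_pm: "x \<in> carrier G \<Longrightarrow> sgn x = 1 \<or> sgn x = -1"
  using sg unfolding hom_def sign_group_def by (auto simp: Pi_def)

lemma sgn_mult: "x \<in> carrier G \<Longrightarrow> y \<in> carrier G \<Longrightarrow> sgn (x \<otimes> y) = sgn x * sgn y"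
  using sg unfolding hom_def sign_group_def by auto

lemma sgn_one: "sgn \<one> = 1"
proof -
  have "sgn \<one> = sgn \<one> * sgn \<one>" using sgn_mult[of \<one> \<one>] by simp
  then show ?thesis using sgn_pm[of \<one>] by auto
qed

lemma sgn_inv: "x \<in> carrier G \<Longrightarrow> sgn (inv x) = sgn x"
proof -
  assume x: "x \<in> carrier G"
  have "sgn x * sgn (inv x) = 1" using sgn_mult[of x "inv x"] x sgn_one by simp
  then show ?thesis using sgn_pm[OF x] sgn_pm[of "inv x"] x by auto
qed

lemma conj_A: "x \<in> carrier G \<Longrightarrow> b \<in> A \<Longrightarrow> x \<otimes> b \<otimes> inv x \<in> A"
  by (rule inv_op_closed2)

lemma conj_f: 
  assumes x: "x \<in> carrier G" and b: "b \<in> A"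
  shows "f (x \<otimes> b \<otimes> inv x) = frag_cmul (sgn x) (f b)"
proof -
  have "inv (inv x) \<otimes> b \<otimes> inv x = b [^] sgn (inv x)" using act x b by (meson inv_closed)
  then have e: "x \<otimes> b \<otimes> inv x = b [^] sgn x" using x by (simp add: sgn_inv)
  show ?thesis
  proof (cases "sgn x = 1")
    case True
    then show ?thesis using e b Ac by simp
  next
    case False
    then have "sgn x = -1" using sgn_pm[OF x] by simp
    then have "x \<otimes> b \<otimes> inv x = inv b" using e b Ac by (simp add: int_pow_neg)
    then show ?thesis using \<open>sgn x = -1\<close> b by (simp add: f_inv frag_cmul_minus_one)
  qed
qed

lemma sgn_A: 
  assumes a: "a \<in> A" shows "sgn a = 1"
proof (rule ccontr)
  assume "sgn a \<noteq> 1"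
  then have s: "sgn a = -1" using sgn_pm a Ac by blast
  define b where "b = finv (frag_of 0)"
  have bv: "frag_of (0::nat) \<in> VI m" using m1 by (simp add: VI_def keys_frag_of)
  have b: "b \<in> A" unfolding b_def by (rule finv_A[OF bv])
  have "f (a \<otimes> b \<otimes> inv a) = frag_cmul (sgn a) (f b)" by (rule conj_f) (use a Ac b in auto)
  moreover have "a \<otimes> b \<otimes> inv a = b"
    using A_comm[OF a b] a b Ac by (simp add: m_assoc)
  ultimately have "f b = - f b" using s by (simp add: frag_cmul_minus_one)
  then have "frag_of (0::nat) = - frag_of 0" unfolding b_def f_finv[OF bv] .
  moreover have "\<forall>v w. v = w \<longrightarrow> Poly_Mapping.lookup v (0::nat) = Poly_Mapping.lookup w 0" by simp
  ultimately have "Poly_Mapping.lookup (frag_of (0::nat)) 0 = Poly_Mapping.lookup (- frag_of (0::nat)) 0" by blast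
  then show False by (simp only: lookup_frag_of lookup_uminus) simp
qed

end



context mt begin

lemma cancel_l [simp]: "a \<in> carrier G \<Longrightarrow> b \<in> carrier G \<Longrightarrow> inv a \<otimes> (a \<otimes> b) = b"
  by (simp add: m_assoc[symmetric])

lemma cancel_r [simp]: "a \<in> carrier G \<Longrightarrow> b \<in> carrier G \<Longrightarrow> a \<otimes> (inv a \<otimes> b) = b"
  by (simp add: m_assoc[symmetric])

definition rep where "rep C = (SOME t. t \<in> C)"
definition kk where "kk C x = x \<otimes> inv (rep (C #> x)) \<otimes> rep C"
definition T where "T x = (\<Sum>C\<in>rcosets A. f (kk C x))"
definition NN :: int where "NN = int (card (rcosets A))"

lemma rep_in:
  assumes C: "C \<in> rcosets A"
  shows "rep C \<in> C" "rep C \<in> carrier G" "A #> rep C = C"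
proof -
  obtain g where g: "g \<in> carrier G" "C = A #> g" using C unfolding RCOSETS_def by blast
  have "g \<in> C" using g rcos_self[OF g(1) subgroup_axioms] by simp
  then show r: "rep C \<in> C" unfolding rep_def by (rule someI)
  show "rep C \<in> carrier G" using r g elemrcos_carrier[OF is_group g(1)] by blast
  show "A #> rep C = C" using repr_independence[of "rep C" A g] r g subgroup_axioms by simp
qed

lemma C_sub: "C \<in> rcosets A \<Longrightarrow> C \<subseteq> carrier G"
  by (rule rcosets_carrier[OF is_group])

lemma shift:
  assumes C: "C \<in> rcosets A" and x: "x \<in> carrier G"
  shows "C #> x = A #> (rep C \<otimes> x)" "C #> x \<in> rcosets A"
proof -
  have "C #> x = (A #> rep C) #> x" using rep_in[OF C] by simp
  also have "\<dots> = A #> (rep C \<otimes> x)" using coset_mult_assoc[of A "rep C" x] subset rep_in[OF C] x by simp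
  finally show e: "C #> x = A #> (rep C \<otimes> x)" .
  show "C #> x \<in> rcosets A" unfolding e using rep_in[OF C] x subset by (intro rcosetsI) auto
qed

lemma kk_A:
  assumes C: "C \<in> rcosets A" and x: "x \<in> carrier G"
  shows "kk C x \<in> A"
proof -
  define t where "t = rep C"
  define t' where "t' = rep (C #> x)"
  have t: "t \<in> carrier G" using rep_in[OF C] by (simp add: t_def)
  have t'C: "t' \<in> A #> (t \<otimes> x)" using rep_in(1)[OF shift(2)[OF C x]] shift(1)[OF C x] by (simp add: t'_def t_def)
  have t': "t' \<in> carrier G" using rep_in(2)[OF shift(2)[OF C x]] by (simp add: t'_def)
  have h: "t' \<otimes> inv (t \<otimes> x) \<in> A" by (rule rcos_module_imp[OF is_group _ t'C]) (use t x in simp)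
  have "inv t \<otimes> inv (t' \<otimes> inv (t \<otimes> x)) \<otimes> inv (inv t) \<in> A"
    by (rule inv_op_closed2) (use t h in auto)
  moreover have "inv t \<otimes> inv (t' \<otimes> inv (t \<otimes> x)) \<otimes> inv (inv t) = kk C x"
    using t t' x by (simp add: kk_def t_def[symmetric] t'_def[symmetric] inv_mult_group m_assoc)
  ultimately show ?thesis by simp
qed

lemma kk_mult:
  assumes C: "C \<in> rcosets A" and x: "x \<in> carrier G" and y: "y \<in> carrier G"
  shows "kk C (x \<otimes> y) = kk C x \<otimes> (x \<otimes> kk (C #> x) y \<otimes> inv x)"
proof -
  have Cx: "C #> x \<in> rcosets A" by (rule shift(2)[OF C x])
  have a1: "kk C x \<in> A" by (rule kk_A[OF C x])
  have a2: "x \<otimes> kk (C #> x) y \<otimes> inv x \<in> A" by (rule inv_op_closed2[OF x kk_A[OF Cx y]])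
  have cxy: "(C #> x) #> y = C #> (x \<otimes> y)" using coset_mult_assoc C_sub[OF C] x y by simp
  have t: "rep C \<in> carrier G" "rep (C #> x) \<in> carrier G" "rep (C #> (x \<otimes> y)) \<in> carrier G"
    using rep_in(2) C Cx shift(2)[OF C] x y by auto
  have "kk C x \<otimes> (x \<otimes> kk (C #> x) y \<otimes> inv x) = (x \<otimes> kk (C #> x) y \<otimes> inv x) \<otimes> kk C x"
    using A_comm a1 a2 by blast
  also have "\<dots> = kk C (x \<otimes> y)"
    using t x y by (simp add: kk_def cxy m_assoc)
  finally show ?thesis by simp
qed

lemma shift_bij:
  assumes x: "x \<in> carrier G"
  shows "bij_betw (\<lambda>C. C #> x) (rcosets A) (rcosets A)"
proof (rule bij_betw_byWitness[where f'="\<lambda>C. C #> inv x"])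
  show "\<forall>C\<in>rcosets A. C #> x #> inv x = C"
    using x C_sub by (simp add: coset_mult_assoc)
  show "\<forall>C\<in>rcosets A. C #> inv x #> x = C"
    using x C_sub by (simp add: coset_mult_assoc)
  show "(\<lambda>C. C #> x) ` (rcosets A) \<subseteq> rcosets A" using shift(2) x by auto
  show "(\<lambda>C. C #> inv x) ` (rcosets A) \<subseteq> rcosets A" using shift(2) x by auto
qed

lemma T_VI: "x \<in> carrier G \<Longrightarrow> T x \<in> VI m"
  unfolding T_def by (rule sum_VI) (simp add: f_VI kk_A)

lemma T_mult:
  assumes x: "x \<in> carrier G" and y: "y \<in> carrier G"
  shows "T (x \<otimes> y) = T x + frag_cmul (sgn x) (T y)"
proof -
  have "T (x \<otimes> y) = (\<Sum>C\<in>rcosets A. f (kk C x) + frag_cmul (sgn x) (f (kk (C #> x) y)))"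
    unfolding T_def
  proof (rule sum.cong)
    fix C assume C: "C \<in> rcosets A"
    have Cx: "C #> x \<in> rcosets A" by (rule shift(2)[OF C x])
    show "f (kk C (x \<otimes> y)) = f (kk C x) + frag_cmul (sgn x) (f (kk (C #> x) y))"
      using kk_mult[OF C x y] f_mult[OF kk_A[OF C x] inv_op_closed2[OF x kk_A[OF Cx y]]]
        conj_f[OF x kk_A[OF Cx y]] by simp
  qed simp
  also have "\<dots> = T x + frag_cmul (sgn x) (\<Sum>C\<in>rcosets A. f (kk (C #> x) y))"
    by (simp add: T_def sum.distrib cmul_sum)
  also have "(\<Sum>C\<in>rcosets A. f (kk (C #> x) y)) = T y"
    unfolding T_def by (rule sum.reindex_bij_betw[OF shift_bij[OF x]])
  finally show ?thesis .
qed

lemma NN_pos: "NN > 0"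
proof -
  have "A #> \<one> \<in> rcosets A" by (rule rcosetsI) (use subset in auto)
  then have "rcosets A \<noteq> {}" by blast
  then show ?thesis using fin by (simp add: NN_def card_gt_0_iff)
qed

lemma T_A:
  assumes a: "a \<in> A"
  shows "T a = frag_cmul NN (f a)"
proof -
  have ac: "a \<in> carrier G" using a Ac by blast
  have k: "kk C a = a" if C: "C \<in> rcosets A" for C
  proof -
    have t: "rep C \<in> carrier G" using rep_in[OF C] by simp
    have "(rep C \<otimes> a) \<otimes> inv (rep C) \<in> A" using inv_op_closed2[OF t a] by simp
    then have "rep C \<otimes> a \<in> A #> rep C" by (intro rcos_module_rev[OF is_group]) (use t ac in auto)
    then have "A #> rep C = A #> (rep C \<otimes> a)" by (intro repr_independence) (use t subgroup_axioms in auto)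
    then have "C #> a = C" using shift(1)[OF C ac] rep_in(3)[OF C] by simp
    then show ?thesis using t ac by (simp add: kk_def m_assoc)
  qed
  have "T a = (\<Sum>C\<in>rcosets A. f a)" unfolding T_def by (rule sum.cong) (simp_all add: k)
  also have "\<dots> = frag_cmul NN (f a)"
    by (rule poly_mapping_eqI) (simp only: lookup_sum, simp add: NN_def)
  finally show ?thesis .
qed

lemma T_one: "T \<one> = 0"
  using T_A[of \<one>] f_one by simp

definition Dm where "Dm L x = finv (L (T x))"
definition phi where "phi L x = Dm L x \<otimes> x"

lemma phi_iso:
  assumes lin: "linmap m L" and bij: "bij_betw (Mm NN L) (VI m) (VI m)"
  shows "phi L \<in> iso G G"
proof -
  have LV: "v \<in> VI m \<Longrightarrow> L v \<in> VI m" for v using lin by (simp add: linmap_def)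
  have Ladd: "L (v + w) = L v + L w" for v w using lin by (simp add: linmap_def)
  have Lc: "L (frag_cmul c v) = frag_cmul c (L v)" for c v using lin by (simp add: linmap_def)
  have DA: "x \<in> carrier G \<Longrightarrow> Dm L x \<in> A" for x unfolding Dm_def by (rule finv_A) (simp add: LV T_VI)
  have cf: "x \<otimes> finv v \<otimes> inv x = finv (frag_cmul (sgn x) v)" if "x \<in> carrier G" "v \<in> VI m" for x v
    by (rule f_inj) (use that in \<open>simp_all add: conj_f finv_A f_finv conj_A\<close>)
  have "(\<lambda>x. Dm L x \<otimes> x) \<in> iso G G"
  proof (rule crossed_aut[OF subgroup_axioms])
    show "x \<in> carrier G \<Longrightarrow> Dm L x \<in> A" for x by (rule DA)
    show "Dm L (x \<otimes> y) = Dm L x \<otimes> (x \<otimes> Dm L y \<otimes> inv x)" if "x \<in> carrier G" "y \<in> carrier G" for x y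
      using that by (simp add: Dm_def T_mult Ladd Lc cf LV T_VI finv_add)
    have e: "Dm L a \<otimes> a = finv (Mm NN L (f a))" if "a \<in> A" for a
    proof -
      have "Dm L a \<otimes> a = finv (frag_cmul NN (L (f a))) \<otimes> finv (f a)"
        using that by (simp add: Dm_def T_A Lc finv_f)
      also have "\<dots> = finv (Mm NN L (f a))" using that
        by (simp add: Mm_def finv_add[symmetric] LV f_VI add.commute)
      finally show ?thesis .
    qed
    have b1: "bij_betw (\<lambda>a. finv (Mm NN L (f a))) A A"
    proof -
      have "bij_betw (finv \<circ> (Mm NN L \<circ> f)) A A"
        by (rule bij_betw_trans[OF bij_betw_trans[OF f_bij bij]])
          (simp add: finv_def bij_betw_inv_into[OF f_bij])
      then show ?thesis by (simp add: comp_def)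
    qed
    show "bij_betw (\<lambda>a. Dm L a \<otimes> a) A A"
      using b1 by (rule bij_betw_cong[THEN iffD2, rotated]) (simp add: e)
  qed
  then show ?thesis by (simp add: phi_def[abs_def])
qed

lemma T_phi:
  assumes lin: "linmap m L" and x: "x \<in> carrier G"
  shows "T (phi L x) = Mm NN L (T x)"
proof -
  have LV: "L (T x) \<in> VI m" using lin T_VI[OF x] by (simp add: linmap_def)
  have DA: "Dm L x \<in> A" unfolding Dm_def by (rule finv_A[OF LV])
  have "T (phi L x) = T (Dm L x) + frag_cmul (sgn (Dm L x)) (T x)"
    unfolding phi_def by (rule T_mult) (use DA Ac x in auto)
  also have "\<dots> = frag_cmul NN (L (T x)) + T x"
    using DA by (simp add: T_A sgn_A Dm_def f_finv LV)
  finally show ?thesis by (simp add: Mm_def add.commute)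
qed

lemma phi_eq:
  assumes lin: "linmap m L" and x: "x \<in> carrier G" and y: "y \<in> carrier G"
    and co: "A #> x = A #> y" and e: "Mm NN L (T x) = T y"
  shows "phi L x = y"
proof -
  have "y \<in> A #> x" using co rcos_self[OF y subgroup_axioms] by simp
  then have b: "y \<otimes> inv x \<in> A" by (rule rcos_module_imp[OF is_group x])
  have bc: "y \<otimes> inv x \<in> carrier G" using x y by simp
  have yeq: "(y \<otimes> inv x) \<otimes> x = y" using x y by (simp add: m_assoc)
  have "T y = T ((y \<otimes> inv x) \<otimes> x)" by (simp only: yeq)
  also have "\<dots> = T (y \<otimes> inv x) + frag_cmul (sgn (y \<otimes> inv x)) (T x)"
    by (rule T_mult) (use bc x in auto)
  also have "\<dots> = frag_cmul NN (f (y \<otimes> inv x)) + T x" using b by (simp add: T_A sgn_A)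
  finally have "T x + frag_cmul NN (L (T x)) = T x + frag_cmul NN (f (y \<otimes> inv x))"
    using e by (simp add: Mm_def add.commute)
  then have hc: "frag_cmul NN (L (T x)) = frag_cmul NN (f (y \<otimes> inv x))" by simp
  have "L (T x) = f (y \<otimes> inv x)" by (rule cmul_inj[OF _ hc]) (use NN_pos in simp)
  then have "Dm L x = y \<otimes> inv x" using b by (simp add: Dm_def finv_f)
  then have "phi L x = (y \<otimes> inv x) \<otimes> x" by (simp add: phi_def)
  then show ?thesis by (simp only: yeq)
qed

end

lemma aut_orbit_iso:
  assumes grp: "group G" and psi: "\<psi> \<in> iso G G" and x: "x \<in> carrier G"
  shows "aut_orbit G (\<psi> x) = aut_orbit G x"
proof
  show "aut_orbit G (\<psi> x) \<subseteq> aut_orbit G x"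
  proof
    fix y assume "y \<in> aut_orbit G (\<psi> x)"
    then obtain \<phi> where p: "\<phi> \<in> iso G G" "y = \<phi> (\<psi> x)" unfolding aut_orbit_def by blast
    have "\<phi> \<circ> \<psi> \<in> iso G G" by (rule iso_set_trans[OF psi p(1)])
    moreover have "y = (\<phi> \<circ> \<psi>) x" using p by simp
    ultimately show "y \<in> aut_orbit G x" unfolding aut_orbit_def by blast
  qed
  show "aut_orbit G x \<subseteq> aut_orbit G (\<psi> x)"
  proof
    fix y assume "y \<in> aut_orbit G x"
    then obtain \<phi> where p: "\<phi> \<in> iso G G" "y = \<phi> x" unfolding aut_orbit_def by blast
    define \<psi>' where "\<psi>' = inv_into (carrier G) \<psi>"
    have i: "\<psi>' \<in> iso G G" unfolding \<psi>'_def by (rule group.iso_set_sym[OF grp psi])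
    have "\<psi>' (\<psi> x) = x" unfolding \<psi>'_def using psi x by (simp add: iso_def bij_betw_def inv_into_f_f)
    moreover have "\<phi> \<circ> \<psi>' \<in> iso G G" by (rule iso_set_trans[OF i p(1)])
    ultimately have "y = (\<phi> \<circ> \<psi>') (\<psi> x)" "\<phi> \<circ> \<psi>' \<in> iso G G" using p by auto
    then show "y \<in> aut_orbit G (\<psi> x)" unfolding aut_orbit_def by blast
  qed
qed



definition norm1 :: "nat \<Rightarrow> (nat \<Rightarrow>\<^sub>0 int) \<Rightarrow> int" where
  "norm1 m v = (\<Sum>i<m. \<bar>Poly_Mapping.lookup v i\<bar>)"

lemma norm1_add: "norm1 m (u + v) \<le> norm1 m u + norm1 m v"
proof -
  have "(\<Sum>i<m. \<bar>Poly_Mapping.lookup (u + v) i\<bar>) \<le> (\<Sum>i<m. \<bar>Poly_Mapping.lookup u i\<bar> + \<bar>Poly_Mapping.lookup v i\<bar>)"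
    by (rule sum_mono) (simp add: lookup_add abs_triangle_ineq)
  then show ?thesis unfolding norm1_def by (simp add: sum.distrib)
qed

lemma norm1_cmul: "norm1 m (frag_cmul c v) = \<bar>c\<bar> * norm1 m v"
  unfolding norm1_def by (simp add: abs_mult sum_distrib_left)

lemma norm1_nonneg: "0 \<le> norm1 m v"
  unfolding norm1_def by (simp add: sum_nonneg)

lemma cont_le_norm1: "cont m v \<le> norm1 m v"
proof (cases "\<exists>i<m. Poly_Mapping.lookup v i \<noteq> 0")
  case True
  then obtain i where i: "i < m" "Poly_Mapping.lookup v i \<noteq> 0" by blast
  have "\<bar>cont m v\<bar> \<le> \<bar>Poly_Mapping.lookup v i\<bar>" by (rule dvd_imp_le_int[OF i(2) cont_dvd[OF i(1)]])
  also have "\<dots> \<le> norm1 m v" unfolding norm1_def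
    by (rule member_le_sum) (use i in auto)
  finally show ?thesis by simp
next
  case False
  then have "cont m v = 0" unfolding cont_def by auto
  then show ?thesis using norm1_nonneg by simp
qed

lemma word_eval_Nil [simp]: "word_eval G [] = \<one>\<^bsub>G\<^esub>"
  by (simp add: word_eval_def)

lemma word_eval_Cons [simp]: "word_eval G (s # ws) = s \<otimes>\<^bsub>G\<^esub> word_eval G ws"
  by (simp add: word_eval_def)

lemma (in group) word_eval_carrier: "set ws \<subseteq> carrier G \<Longrightarrow> word_eval G ws \<in> carrier G"
  by (induction ws) auto

lemma (in group) word_eval_append:
  "set ws1 \<subseteq> carrier G \<Longrightarrow> set ws2 \<subseteq> carrier G \<Longrightarrow> word_eval G (ws1 @ ws2) = word_eval G ws1 \<otimes> word_eval G ws2"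
  by (induction ws1) (auto simp: word_eval_carrier m_assoc)

lemma (in group) word_eval_pow:
  assumes "set ws \<subseteq> carrier G"
  shows "word_eval G (concat (replicate k ws)) = word_eval G ws [^] k"
proof (induction k)
  case 0
  then show ?case by simp
next
  case (Suc k)
  have "word_eval G (concat (replicate (Suc k) ws)) = word_eval G ws \<otimes> word_eval G (concat (replicate k ws))"
  proof -
    have "set (concat (replicate k ws)) \<subseteq> carrier G" using assms by (cases k) auto
    then show ?thesis using assms by (simp add: word_eval_append)
  qed
  also have "\<dots> = word_eval G ws [^] Suc k"
    by (simp only: Suc.IH nat_pow_Suc2[OF word_eval_carrier[OF assms]])
  finally show ?case .
qed

locale mt2 = mt A G m sgn f for A and G (structure) and m sgn f +
  fixes S
  assumes Sfin: "finite S" and Ssub: "S \<subseteq> carrier G" and Sgen: "generate G S = carrier G"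
begin

definition SS where "SS = S \<union> (\<lambda>s. inv s) ` S"

lemma SS_fin: "finite SS" using Sfin by (simp add: SS_def)

lemma SS_sub: "SS \<subseteq> carrier G" using Ssub by (auto simp: SS_def)

lemma gen_word: "x \<in> generate G S \<Longrightarrow> \<exists>ws. set ws \<subseteq> SS \<and> word_eval G ws = x"
proof (induction rule: generate.induct)
  case one
  then show ?case by (intro exI[of _ "[]"]) simp
next
  case (incl h)
  then show ?case using Ssub by (intro exI[of _ "[h]"]) (auto simp: SS_def)
next
  case (inv h)
  then show ?case using Ssub by (intro exI[of _ "[inv h]"]) (auto simp: SS_def)
next
  case (eng h1 h2)
  then obtain ws1 ws2 where "set ws1 \<subseteq> SS" "word_eval G ws1 = h1" "set ws2 \<subseteq> SS" "word_eval G ws2 = h2" by blast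
  then show ?case using SS_sub by (intro exI[of _ "ws1 @ ws2"]) (auto simp: word_eval_append)
qed

lemma wl_word:
  assumes x: "x \<in> carrier G"
  shows "\<exists>ws. length ws = word_length G S x \<and> set ws \<subseteq> SS \<and> word_eval G ws = x"
proof -
  obtain ws where "set ws \<subseteq> SS" "word_eval G ws = x" using gen_word x Sgen by blast
  then have "\<exists>k ws. length ws = k \<and> set ws \<subseteq> S \<union> (\<lambda>s. inv s) ` S \<and> word_eval G ws = x"
    by (auto simp: SS_def)
  then show ?thesis unfolding word_length_def SS_def by (rule LeastI_ex)
qed

lemma wl_le:
  assumes "set ws \<subseteq> SS" "word_eval G ws = x"
  shows "word_length G S x \<le> length ws"
  unfolding word_length_def by (rule Least_le) (use assms in \<open>auto simp: SS_def\<close>)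

definition BB where "BB = (\<Sum>s\<in>SS. norm1 m (T s))"

lemma BB_ge: "s \<in> SS \<Longrightarrow> norm1 m (T s) \<le> BB"
  unfolding BB_def by (rule member_le_sum) (use SS_fin norm1_nonneg in auto)

lemma T_word: "set ws \<subseteq> SS \<Longrightarrow> norm1 m (T (word_eval G ws)) \<le> BB * int (length ws)"
proof (induction ws)
  case Nil
  then show ?case by (simp add: T_one norm1_def)
next
  case (Cons s ws)
  have s: "s \<in> carrier G" using Cons SS_sub by auto
  have w: "word_eval G ws \<in> carrier G" using Cons SS_sub by (auto intro: word_eval_carrier)
  have "norm1 m (T (word_eval G (s # ws))) = norm1 m (T s + frag_cmul (sgn s) (T (word_eval G ws)))"
    using s w by (simp add: T_mult)
  also have "\<dots> \<le> norm1 m (T s) + norm1 m (T (word_eval G ws))"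
  proof -
    have "\<bar>sgn s\<bar> = 1" using sgn_pm[OF s] by auto
    then show ?thesis using norm1_add[of m "T s" "frag_cmul (sgn s) (T (word_eval G ws))"]
      norm1_cmul[of m "sgn s" "T (word_eval G ws)"] by simp
  qed
  also have "\<dots> \<le> BB + BB * int (length ws)" using Cons BB_ge[of s] by auto
  finally show ?case by (simp add: algebra_simps)
qed

lemma cont_T_bound:
  assumes x: "x \<in> carrier G"
  shows "cont m (T x) \<le> BB * int (word_length G S x)"
proof -
  obtain ws where ws: "length ws = word_length G S x" "set ws \<subseteq> SS" "word_eval G ws = x"
    using wl_word[OF x] by blast
  show ?thesis using cont_le_norm1[of m "T x"] T_word[OF ws(2)] ws by simp
qed

lemma orbit_key:
  assumes x: "x \<in> carrier G" and y: "y \<in> carrier G" and co: "A #> x = A #> y"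
    and cc: "cont m (T x) = cont m (T y)"
    and res: "\<And>i. i < m \<Longrightarrow> Poly_Mapping.lookup (divp (cont m (T x)) (T x)) i mod NN
                         = Poly_Mapping.lookup (divp (cont m (T y)) (T y)) i mod NN"
  shows "aut_orbit G x = aut_orbit G y"
proof -
  have "\<exists>L. linmap m L \<and> bij_betw (Mm NN L) (VI m) (VI m) \<and> Mm NN L (T x) = T y"
  proof (cases "cont m (T x) = 0")
    case True
    have tx: "T x = 0" using True cont_0_iff[OF T_VI[OF x]] by simp
    have ty: "T y = 0" using True cc cont_0_iff[OF T_VI[OF y]] by simp
    have lin0: "linmap m (\<lambda>_. 0)" by (simp add: linmap_def)
    have mid: "Mm NN (\<lambda>_. 0) = (\<lambda>v. v)" by (rule ext) (simp add: Mm_def)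
    have "bij_betw (\<lambda>v. v) (VI m) (VI m)" by (simp add: bij_betw_def)
    then have "bij_betw (Mm NN (\<lambda>_. 0)) (VI m) (VI m)" by (simp only: mid)
    then show ?thesis using lin0 tx ty mid by (intro exI[of _ "\<lambda>_. 0"]) simp
  next
    case False
    have nz: "T x \<noteq> 0" "T y \<noteq> 0"
      using False cc cont_0_iff[OF T_VI[OF x]] cont_0_iff[OF T_VI[OF y]] by auto
    define d where "d = cont m (T x)"
    have px: "divp d (T x) \<in> VI m" "cont m (divp d (T x)) = 1" "frag_cmul d (divp d (T x)) = T x"
      using prim_decomp[OF T_VI[OF x] nz(1)] by (auto simp: d_def)
    have py: "divp d (T y) \<in> VI m" "cont m (divp d (T y)) = 1" "frag_cmul d (divp d (T y)) = T y"
      using prim_decomp[OF T_VI[OF y] nz(2)] cc by (auto simp: d_def)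
    obtain L where L: "linmap m L" "bij_betw (Mm NN L) (VI m) (VI m)" "Mm NN L (divp d (T x)) = divp d (T y)"
      using transitivity[OF NN_pos px(1) py(1) px(2) py(2)] res cc by (auto simp: d_def)
    define w where "w = divp d (T x)"
    have Lc: "L (frag_cmul d w) = frag_cmul d (L w)" using L(1) by (simp add: linmap_def)
    have "Mm NN L (T x) = Mm NN L (frag_cmul d w)" using px(3) by (simp add: w_def)
    also have "\<dots> = frag_cmul d w + frag_cmul NN (frag_cmul d (L w))" by (simp add: Mm_def Lc)
    also have "\<dots> = frag_cmul d (Mm NN L w)" by (simp add: Mm_def frag_cmul_distrib2 mult.commute)
    finally have "Mm NN L (T x) = frag_cmul d (Mm NN L (divp d (T x)))" by (simp add: w_def)
    then have "Mm NN L (T x) = T y" using L(3) py(3) by simp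
    then show ?thesis using L by blast
  qed
  then obtain L where L: "linmap m L" "bij_betw (Mm NN L) (VI m) (VI m)" "Mm NN L (T x) = T y" by blast
  have "phi L x = y" by (rule phi_eq[OF L(1) x y co L(3)])
  moreover have "aut_orbit G (phi L x) = aut_orbit G x"
    by (rule aut_orbit_iso[OF is_group phi_iso[OF L(1) L(2)] x])
  ultimately show ?thesis by simp
qed

end



context mt2 begin

definition key where
  "key x = (A #> x, nat (cont m (T x)), map (\<lambda>i. Poly_Mapping.lookup (divp (cont m (T x)) (T x)) i mod NN) [0..<m])"

definition KS where
  "KS n = (rcosets A) \<times> {0..nat BB * n} \<times> {xs. set xs \<subseteq> {0..<NN} \<and> length xs = m}"

lemma BB_nonneg: "0 \<le> BB"
  unfolding BB_def by (rule sum_nonneg) (simp add: norm1_nonneg)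

lemma KS_fin: "finite (KS n)"
  unfolding KS_def using fin by (intro finite_cartesian_product finite_lists_length_eq) auto

lemma card_KS: "card (KS n) = card (rcosets A) * ((nat BB * n + 1) * nat NN ^ m)"
  unfolding KS_def by (simp add: card_cartesian_product card_lists_length_eq)

lemma key_KS:
  assumes x: "x \<in> carrier G" and wl: "word_length G S x \<le> n"
  shows "key x \<in> KS n"
proof -
  have "A #> x \<in> rcosets A" using x subset by (intro rcosetsI) auto
  moreover have "cont m (T x) \<le> BB * int n"
    using cont_T_bound[OF x] wl BB_nonneg by (meson mult_left_mono of_nat_le_iff order_trans)
  then have "nat (cont m (T x)) \<le> nat BB * n" using BB_nonneg by (simp add: nat_le_iff nat_mult_distrib)
  moreover have "set (map (\<lambda>i. Poly_Mapping.lookup (divp (cont m (T x)) (T x)) i mod NN) [0..<m]) \<subseteq> {0..<NN}"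
    using NN_pos by auto
  ultimately show ?thesis unfolding KS_def key_def by auto
qed

lemma key_eq:
  assumes x: "x \<in> carrier G" and y: "y \<in> carrier G" and k: "key x = key y"
  shows "aut_orbit G x = aut_orbit G y"
proof (rule orbit_key[OF x y])
  show "A #> x = A #> y" using k by (simp add: key_def)
  have "nat (cont m (T x)) = nat (cont m (T y))" using k by (simp add: key_def)
  then show cc: "cont m (T x) = cont m (T y)" using cont_nonneg[of m "T x"] cont_nonneg[of m "T y"] by simp
  fix i assume i: "i < m"
  show "Poly_Mapping.lookup (divp (cont m (T x)) (T x)) i mod NN = Poly_Mapping.lookup (divp (cont m (T y)) (T y)) i mod NN"
    using k i by (simp add: key_def)
qed

lemma growth_upper: "aut_growth G S n \<le> card (KS n)"
proof -
  define pick where "pick k = (SOME y. y \<in> carrier G \<and> key y = k)" for k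
  have sub: "{aut_orbit G x | x. x \<in> carrier G \<and> word_length G S x \<le> n} \<subseteq> (\<lambda>k. aut_orbit G (pick k)) ` KS n"
  proof
    fix Ob assume "Ob \<in> {aut_orbit G x | x. x \<in> carrier G \<and> word_length G S x \<le> n}"
    then obtain x where x: "x \<in> carrier G" "word_length G S x \<le> n" "Ob = aut_orbit G x" by blast
    have ex: "\<exists>y. y \<in> carrier G \<and> key y = key x" using x by blast
    have p: "pick (key x) \<in> carrier G \<and> key (pick (key x)) = key x"
      unfolding pick_def by (rule someI_ex[OF ex])
    have "Ob = aut_orbit G (pick (key x))" using key_eq[OF x(1)] p x(3) by simp
    then show "Ob \<in> (\<lambda>k. aut_orbit G (pick k)) ` KS n" using key_KS[OF x(1) x(2)] by blast
  qed
  have "aut_growth G S n \<le> card ((\<lambda>k. aut_orbit G (pick k)) ` KS n)"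
    unfolding aut_growth_def by (rule card_mono[OF finite_imageI[OF KS_fin] sub])
  also have "\<dots> \<le> card (KS n)" by (rule card_image_le[OF KS_fin])
  finally show ?thesis .
qed

lemma upper_le: "growth_le (aut_growth G S) (\<lambda>n. n)"
proof -
  define R where "R = card (rcosets A)"
  define Q where "Q = nat NN ^ m"
  define B where "B = nat BB"
  define c where "c = R * Q * (B + 1) + 1"
  have "aut_growth G S n \<le> c * (c * n + c) + c" for n
  proof -
    have "aut_growth G S n \<le> R * ((B * n + 1) * Q)" using growth_upper[of n] card_KS[of n]
      by (simp add: R_def Q_def B_def)
    also have "\<dots> = R * Q * B * n + R * Q" by (simp add: algebra_simps)
    also have "\<dots> \<le> R * Q * (B + 1) * n + R * Q * (B + 1)"
    proof (rule add_le_mono)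
      show "R * Q * B * n \<le> R * Q * (B + 1) * n" by (intro mult_le_mono1 mult_le_mono2) simp
    qed simp
    also have "\<dots> \<le> c * n + c" by (simp add: c_def algebra_simps)
    also have "\<dots> \<le> c * (c * n + c)" using c_def by simp
    finally show ?thesis by simp
  qed
  moreover have "c \<noteq> 0" by (simp add: c_def)
  ultimately show ?thesis unfolding growth_le_def by blast
qed

end



context mt2 begin

lemma pow_A: "a \<in> A \<Longrightarrow> a [^] (n::nat) \<in> A"
  by (induction n) (auto simp: Ac)

lemma f_pow: "a \<in> A \<Longrightarrow> f (a [^] (n::nat)) = frag_cmul (int n) (f a)"
proof (induction n)
  case 0
  then show ?case using f_one by simp
next
  case (Suc n)
  then show ?case using pow_A[OF Suc.prems, of n] by (simp add: f_mult frag_cmul_distrib)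
qed

lemma sgn_pow: "y \<in> carrier G \<Longrightarrow> sgn (y [^] (n::nat)) = sgn y ^ n"
  by (induction n) (auto simp: sgn_one sgn_mult)

lemma T_pow: "y \<in> carrier G \<Longrightarrow> sgn y = 1 \<Longrightarrow> T (y [^] (n::nat)) = frag_cmul (int n) (T y)"
proof (induction n)
  case 0
  then show ?case by (simp add: T_one)
next
  case (Suc n)
  have "T (y [^] Suc n) = T (y [^] n \<otimes> y)" by simp
  also have "\<dots> = T (y [^] n) + frag_cmul (sgn (y [^] n)) (T y)" by (rule T_mult) (use Suc.prems in auto)
  also have "\<dots> = frag_cmul (int (Suc n)) (T y)" using Suc by (simp add: sgn_pow frag_cmul_distrib)
  finally show ?case .
qed

definition a0 where "a0 = finv (frag_of 0)"

lemma a0_A: "a0 \<in> A"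
proof -
  have "frag_of (0::nat) \<in> VI m" using m1 by (simp add: VI_def keys_frag_of)
  then show ?thesis unfolding a0_def by (rule finv_A)
qed

lemma f_a0: "f a0 = frag_of 0"
proof -
  have "frag_of (0::nat) \<in> VI m" using m1 by (simp add: VI_def keys_frag_of)
  then show ?thesis unfolding a0_def by (rule f_finv)
qed

lemma root:
  assumes y: "y \<in> carrier G" and e: "y [^] k' = a0 [^] (k::nat)" and odd: "odd k'"
    and cop: "coprime (int k') NN"
  shows "k' dvd k"
proof -
  have "sgn (y [^] k') = 1" using e pow_A[OF a0_A] sgn_A by simp
  then have s1: "sgn y ^ k' = 1" using sgn_pow[OF y] by simp
  have sy: "sgn y = 1"
  proof (rule ccontr)
    assume "sgn y \<noteq> 1"
    then have "sgn y = -1" using sgn_pm[OF y] by simp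
    then show False using s1 odd by simp
  qed
  have te: "T (y [^] k') = T (a0 [^] k)" using e by simp
  have t1: "T (y [^] k') = frag_cmul (int k') (T y)" by (rule T_pow[OF y sy])
  have t2: "T (a0 [^] k) = frag_cmul NN (f (a0 [^] k))" by (rule T_A[OF pow_A[OF a0_A]])
  have t3: "f (a0 [^] k) = frag_cmul (int k) (f a0)" by (rule f_pow[OF a0_A])
  have "frag_cmul (int k') (T y) = frag_cmul NN (frag_cmul (int k) (f a0))"
    using te by (simp only: t1 t2 t3)
  moreover have "\<forall>v w. v = w \<longrightarrow> Poly_Mapping.lookup v (0::nat) = Poly_Mapping.lookup w 0" by simp
  ultimately have l0: "Poly_Mapping.lookup (frag_cmul (int k') (T y)) 0 = Poly_Mapping.lookup (frag_cmul NN (frag_cmul (int k) (f a0))) 0"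
    by blast
  have "Poly_Mapping.lookup (f a0) 0 = 1" unfolding f_a0 by (simp only: lookup_frag_of) simp
  then have l1: "int k' * Poly_Mapping.lookup (T y) 0 = NN * int k" using l0 by (simp only: lookup_frag_cmul)
  have "int k' dvd int k' * Poly_Mapping.lookup (T y) 0" by (rule dvd_triv_left)
  then have "int k' dvd NN * int k" by (simp only: l1)
  then have "int k' dvd int k" using cop by (simp add: coprime_dvd_mult_right_iff)
  then show ?thesis by simp
qed

definition kj where "kj j = 1 + 2 * nat NN * j"

lemma kj_cop: "coprime (int (kj j)) NN"
proof -
  have "int (kj j) = (2 * int j) * NN + 1" using NN_pos by (simp add: kj_def algebra_simps)
  then have "gcd NN (int (kj j)) = gcd NN 1" by (simp add: gcd_add_mult)
  then show ?thesis by (simp add: coprime_iff_gcd_eq_1 gcd.commute)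
qed

lemma kj_odd: "odd (kj j)" by (simp add: kj_def)

lemma orbits_distinct:
  assumes "j < j'"
  shows "aut_orbit G (a0 [^] kj j) \<noteq> aut_orbit G (a0 [^] kj j')"
proof
  assume eq: "aut_orbit G (a0 [^] kj j) = aut_orbit G (a0 [^] kj j')"
  have a0c: "a0 \<in> carrier G" using a0_A Ac by blast
  have "a0 [^] kj j \<in> aut_orbit G (a0 [^] kj j)"
    unfolding aut_orbit_def by (rule CollectI, rule exI[of _ "\<lambda>x. x"]) (simp add: iso_set_refl)
  then have "a0 [^] kj j \<in> aut_orbit G (a0 [^] kj j')" by (simp only: eq)
  then obtain \<phi> where p: "\<phi> \<in> iso G G" "a0 [^] kj j = \<phi> (a0 [^] kj j')"
    unfolding aut_orbit_def by blast
  have ph: "\<phi> \<in> hom G G" using p(1) by (rule iso_imp_homomorphism)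
  have yc: "\<phi> a0 \<in> carrier G" using ph a0c by (rule hom_in_carrier)
  have "\<phi> (a0 [^] kj j') = \<phi> a0 [^] kj j'"
    by (rule hom_nat_pow[OF ph a0c is_group is_group])
  then have "\<phi> a0 [^] kj j' = a0 [^] kj j" using p(2) by simp
  then have "kj j' dvd kj j" by (rule root[OF yc _ kj_odd kj_cop])
  moreover have "0 < kj j" "kj j < kj j'" using assms NN_pos by (auto simp: kj_def)
  ultimately have "kj j' \<le> kj j" using dvd_imp_le by blast
  then show False using \<open>kj j < kj j'\<close> by linarith
qed

lemma orbits_fin: "finite {aut_orbit G x | x. x \<in> carrier G \<and> word_length G S x \<le> N}"
proof -
  have "{aut_orbit G x | x. x \<in> carrier G \<and> word_length G S x \<le> N}
      \<subseteq> aut_orbit G ` word_eval G ` {ws. set ws \<subseteq> SS \<and> length ws \<le> N}"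
  proof
    fix Ob assume "Ob \<in> {aut_orbit G x | x. x \<in> carrier G \<and> word_length G S x \<le> N}"
    then obtain x where x: "x \<in> carrier G" "word_length G S x \<le> N" "Ob = aut_orbit G x" by blast
    obtain ws where "length ws = word_length G S x" "set ws \<subseteq> SS" "word_eval G ws = x" using wl_word[OF x(1)] by blast
    then show "Ob \<in> aut_orbit G ` word_eval G ` {ws. set ws \<subseteq> SS \<and> length ws \<le> N}" using x by auto
  qed
  then show ?thesis by (rule finite_subset) (intro finite_imageI finite_lists_length_le SS_fin)
qed

lemma wl_pow: "word_length G S (a0 [^] k) \<le> k * word_length G S a0"
proof -
  have a0c: "a0 \<in> carrier G" using a0_A Ac by blast
  obtain ws where ws: "length ws = word_length G S a0" "set ws \<subseteq> SS" "word_eval G ws = a0"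
    using wl_word[OF a0c] by blast
  have "set (concat (replicate k ws)) \<subseteq> SS" using ws(2) by (cases k) auto
  moreover have "word_eval G (concat (replicate k ws)) = a0 [^] k"
    using word_eval_pow[of ws k] ws SS_sub by auto
  ultimately have "word_length G S (a0 [^] k) \<le> length (concat (replicate k ws))" by (rule wl_le)
  also have "\<dots> = k * word_length G S a0" using ws(1) by (simp add: length_concat sum_list_replicate)
  finally show ?thesis .
qed

lemma lower_le: "growth_le (\<lambda>n. n) (aut_growth G S)"
proof -
  define La where "La = word_length G S a0"
  define c where "c = 2 * nat NN * La + La + 1"
  have "n \<le> c * aut_growth G S (c * n + c) + c" for n
  proof -
    let ?O = "{aut_orbit G x | x. x \<in> carrier G \<and> word_length G S x \<le> c * n + c}"
    have sub: "(\<lambda>j. aut_orbit G (a0 [^] kj j)) ` {0..n} \<subseteq> ?O"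
    proof
      fix Ob assume "Ob \<in> (\<lambda>j. aut_orbit G (a0 [^] kj j)) ` {0..n}"
      then obtain j where j: "j \<le> n" "Ob = aut_orbit G (a0 [^] kj j)" by auto
      have "word_length G S (a0 [^] kj j) \<le> kj j * La" using wl_pow by (simp add: La_def)
      also have "\<dots> \<le> (1 + 2 * nat NN * n) * La" using j(1) by (intro mult_le_mono1) (simp add: kj_def)
      also have "\<dots> \<le> c * n + c" by (simp add: c_def algebra_simps)
      finally have "word_length G S (a0 [^] kj j) \<le> c * n + c" .
      moreover have "a0 [^] kj j \<in> carrier G" using a0_A Ac by simp
      ultimately show "Ob \<in> ?O" using j(2) by blast
    qed
    have inj: "inj_on (\<lambda>j. aut_orbit G (a0 [^] kj j)) {0..n}"
    proof (rule inj_onI)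
      fix j j' assume "j \<in> {0..n}" "j' \<in> {0..n}" and e: "aut_orbit G (a0 [^] kj j) = aut_orbit G (a0 [^] kj j')"
      show "j = j'"
      proof (rule ccontr)
        assume "j \<noteq> j'"
        then consider "j < j'" | "j' < j" by linarith
        then show False using orbits_distinct e by cases metis+
      qed
    qed
    have "n + 1 = card ((\<lambda>j. aut_orbit G (a0 [^] kj j)) ` {0..n})" using card_image[OF inj] by simp
    also have "\<dots> \<le> card ?O" by (rule card_mono[OF orbits_fin sub])
    also have "\<dots> = aut_growth G S (c * n + c)" by (simp add: aut_growth_def)
    finally have "n \<le> aut_growth G S (c * n + c)" by simp
    also have "\<dots> \<le> c * aut_growth G S (c * n + c)" by (simp add: c_def)
    finally show ?thesis by simp
  qed
  moreover have "c \<noteq> 0" by (simp add: c_def)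
  ultimately show ?thesis unfolding growth_le_def by blast
qed

end

theorem mainTheorem11:
  fixes G :: "('a, 'b) monoid_scheme" and A :: "'a set" and m :: nat
    and sgn :: "'a \<Rightarrow> int" and S :: "'a set"
  assumes "group G"
    and "A \<lhd> G"
    and "finite (rcosets\<^bsub>G\<^esub> A)"
    and "m \<ge> 1"
    and "G\<lparr>carrier := A\<rparr> \<cong> free_Abelian_group {..<m}"
    and "sgn \<in> hom G sign_group"
    and "\<forall>g\<in>carrier G. \<forall>x\<in>A. inv\<^bsub>G\<^esub> g \<otimes>\<^bsub>G\<^esub> x \<otimes>\<^bsub>G\<^esub> g = x [^]\<^bsub>G\<^esub> sgn g"
    and "finite S" and "S \<subseteq> carrier G" and "generate G S = carrier G"
  shows "growth_equiv (aut_growth G S) (\<lambda>n. n)"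
proof -
  obtain f where f: "f \<in> iso (G\<lparr>carrier := A\<rparr>) (free_Abelian_group {..<m})"
    using assms(5) unfolding is_iso_def by blast
  have "mt2 A G m sgn f S"
    unfolding mt2_def mt2_axioms_def mt_def mt_axioms_def using assms f by auto
  then interpret mt2 A G m sgn f S .
  show ?thesis unfolding growth_equiv_def using upper_le lower_le by blast
qed


end
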